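(* For every $t\ge 1$, LOCAL-WEFT$[t]\subseteq$ LOCAL-FPT.
   Context: Distributed LOCAL model: a network is a finite connected undirected graph $G$, $n=|V(G)|$, nodes have unique $O(\log n)$-bit identifiers, initially know only their identifier, their neighbours' identifiers, their input labels and the parameter $k$; computation in synchronous rounds with unbounded messages to neighbours and arbitrary local computation; time = number of rounds. $\mathcal G_{s,t}$ is the set of finite connected graphs with unary predicates $P_1..P_s$ and binary predicates $E_1..E_t$; a parameterized problem is a set $\mathsf P\subseteq\mathcal G_{s,t}\times\mathbb N$. An algorithm decides $\mathsf P$ if every node outputs accept/reject and $(G,k)\in\mathsf P$ iff some node accepts. LOCAL-FPT: problems decided by a LOCAL algorithm in $f(k)$ rounds, $f$ computable. LOCAL reductions: a LOCAL algorithm turning $(G,k)$ into $(G',k')$ represented by maps $\nu:V(G')\to V(G)$ and $\eta$ assigning to each edge $\{x,y\}\in E(G')$ a path of $G$ between $\nu(x)$ and $\nu(y)$ (stored at the nodes of $G$; all nodes know $k'$). $\mathsf P_1\le_{\mathrm{LOCAL}}\mathsf P_2$ if for computable $s,r,t,p$ such a reduction exists with $|V(G')|\le|V(G)|^{s(k)}$, all paths $\eta(e)$ of length $\le r(k)$, running time $\le t(k)$ rounds, $k'\le p(k)$, and $(G,k)\in\mathsf P_1\iff(G',k')\in\mathsf P_2$ (congestion unbounded). $[\mathcal P]^{\mathrm{LOCAL}}$ is the set of problems reducing to some member of $\mathcal P$. Circuits: a Boolean decision circuit with $n$ inputs is $C=(V,E,\beta)$, $(V,E)$ a finite DAG, $\beta:V\to\{\neg,\vee,\wedge,\bigvee,\bigwedge\}\cup\{x_1,\dots,x_n\}$,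 where in-degree-0 vertices are input gates labelled by some $x_i$, in-degree-1 vertices are $\neg$, in-degree-2 vertices are $\vee$ or $\wedge$ (small gates), in-degree $\ge3$ vertices are $\bigvee$ or $\bigwedge$ (large gates), and there is exactly one vertex of out-degree 0, the output gate. It computes $f_C:\{0,1\}^n\to\{0,1\}$ in the usual way. Depth: maximum number of gates on an input–output path; weft: maximum number of large gates on an input–output path. A circuit is viewed as a coloured connected graph (edge orientation and gate types as predicates, input indices as local labels). For a family $\mathcal F$ of circuits, $\mathsf P_{\mathcal F}=\{(C,k): C\in\mathcal F$ and $C$ accepts some input vector with exactly $k$ ones$\}$. Weft$[t]$ is the class of all $\mathsf P_{\mathcal F}$ where all circuits of $\mathcal F$ have depth bounded by a common constant and weft at most $t$. LOCAL-WEFT$[t]:=[\text{Weft}[t]]^{\mathrm{LOCAL}}$. *)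

theory Defs
  imports Main
begin

section \<open>Computable functions (mu-recursive functions)\<close>

datatype recf = RZ | RS | RP nat | RC recf "recf list" | RPr recf recf | RMn recf

inductive reval :: "recf \<Rightarrow> nat list \<Rightarrow> nat \<Rightarrow> bool" where
  zero: "reval RZ xs 0"
| succ: "reval RS (x # xs) (Suc x)"
| proj: "i < length xs \<Longrightarrow> reval (RP i) xs (xs ! i)"
| comp: "list_all2 (\<lambda>g y. reval g xs y) gs ys \<Longrightarrow> reval f ys z \<Longrightarrow> reval (RC f gs) xs z"
| pr0: "reval f xs y \<Longrightarrow> reval (RPr f g) (0 # xs) y"
| prS: "reval (RPr f g) (n # xs) y \<Longrightarrow> reval g (y # n # xs) z
        \<Longrightarrow> reval (RPr f g) (Suc n # xs) z"
| mn: "reval f (n # xs) 0 \<Longrightarrow> (\<forall>m<n. \<exists>y>0. reval f (m # xs) y) \<Longrightarrow> reval (RMn f) xs n"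

definition computable :: "(nat \<Rightarrow> nat) \<Rightarrow> bool" where
  "computable f \<longleftrightarrow> (\<exists>r. \<forall>n. reval r [n] (f n))"

section \<open>Labelled graphs (the class G_{s,t}); vertices are the node identifiers\<close>

record lstruct =
  sverts :: "nat set"
  sadj :: "nat \<Rightarrow> nat \<Rightarrow> bool"
  sunary :: "nat \<Rightarrow> nat \<Rightarrow> bool"          (* sunary G i x  =  P_{i+1}(x) *)
  sbinary :: "nat \<Rightarrow> nat \<Rightarrow> nat \<Rightarrow> bool"  (* sbinary G i x y = E_{i+1}(x,y) *)

definition wf_struct :: "nat \<Rightarrow> nat \<Rightarrow> lstruct \<Rightarrow> bool" where
  "wf_struct s t G \<longleftrightarrow>
     finite (sverts G) \<and> sverts G \<noteq> {} \<and>
     (\<forall>x y. sadj G x y \<longrightarrow> x \<in> sverts G \<and> y \<in> sverts G \<and> x \<noteq> y \<and> sadj G y x) \<and>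
     (\<forall>x\<in>sverts G. \<forall>y\<in>sverts G. (x, y) \<in> {(a, b). sadj G a b}\<^sup>*) \<and>
     (\<forall>i x. sunary G i x \<longrightarrow> i < s \<and> x \<in> sverts G) \<and>
     (\<forall>i x y. sbinary G i x y \<longrightarrow> i < t \<and> sadj G x y)"

definition struct_iso :: "lstruct \<Rightarrow> lstruct \<Rightarrow> bool" where
  "struct_iso G H \<longleftrightarrow> (\<exists>f. bij_betw f (sverts G) (sverts H) \<and>
     (\<forall>x\<in>sverts G. \<forall>y\<in>sverts G. sadj H (f x) (f y) \<longleftrightarrow> sadj G x y) \<and>
     (\<forall>i. \<forall>x\<in>sverts G. sunary H i (f x) \<longleftrightarrow> sunary G i x) \<and>
     (\<forall>i. \<forall>x\<in>sverts G. \<forall>y\<in>sverts G. sbinary H i (f x) (f y) \<longleftrightarrow> sbinary G i x y))"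

text \<open>A parameterized problem: a set of pairs (G,k) with G in G_{s,t}, closed under isomorphism
  (graphs are abstract objects; identifiers are not part of the instance).\<close>
definition param_problem :: "nat \<Rightarrow> nat \<Rightarrow> (lstruct \<times> nat) set \<Rightarrow> bool" where
  "param_problem s t P \<longleftrightarrow>
     (\<forall>(G, k)\<in>P. wf_struct s t G) \<and>
     (\<forall>G H k. (G, k) \<in> P \<longrightarrow> wf_struct s t H \<longrightarrow> struct_iso G H \<longrightarrow> (H, k) \<in> P)"

text \<open>Identifiers: the vertices themselves, with O(log n) bits, i.e. all below n^c.\<close>
definition valid_ids :: "nat \<Rightarrow> lstruct \<Rightarrow> bool" where
  "valid_ids c G \<longleftrightarrow> sverts G \<subseteq> {..< card (sverts G) ^ c}"

section \<open>LOCAL algorithms\<close>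

text \<open>States and messages are natural numbers (any finite information can be encoded;
  local computation is arbitrary). The initial state depends on k, the own identifier,
  the own unary labels, the set of neighbour identifiers, and the labels of incident edges.\<close>
record 'o lalg =
  a_init :: "nat \<Rightarrow> nat \<Rightarrow> (nat \<Rightarrow> bool) \<Rightarrow> nat set \<Rightarrow> (nat \<Rightarrow> nat \<Rightarrow> bool) \<Rightarrow> (nat \<Rightarrow> nat \<Rightarrow> bool) \<Rightarrow> nat"
  a_msg :: "nat \<Rightarrow> nat \<Rightarrow> nat"            (* state, recipient id \<Rightarrow> message *)
  a_step :: "nat \<Rightarrow> (nat \<Rightarrow> nat) \<Rightarrow> nat"   (* state, messages by sender id \<Rightarrow> new state *)
  a_out :: "nat \<Rightarrow> 'o"

fun lrun :: "'o lalg \<Rightarrow> nat \<Rightarrow> lstruct \<Rightarrow> nat \<Rightarrow> nat \<Rightarrow> nat" where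
  "lrun A k G 0 v = a_init A k v (\<lambda>i. sunary G i v) {w. sadj G v w}
                      (\<lambda>i w. sbinary G i v w) (\<lambda>i w. sbinary G i w v)"
| "lrun A k G (Suc r) v = a_step A (lrun A k G r v)
                      (\<lambda>w. if sadj G v w then a_msg A (lrun A k G r w) v else 0)"

definition decides :: "nat \<Rightarrow> nat \<Rightarrow> nat \<Rightarrow> bool lalg \<Rightarrow> (nat \<Rightarrow> nat) \<Rightarrow> (lstruct \<times> nat) set \<Rightarrow> bool" where
  "decides c s t A f P \<longleftrightarrow>
     (\<forall>G k. wf_struct s t G \<longrightarrow> valid_ids c G \<longrightarrow>
        ((G, k) \<in> P \<longleftrightarrow> (\<exists>v\<in>sverts G. a_out A (lrun A k G (f k) v))))"

definition LOCAL_FPT :: "nat \<Rightarrow> (lstruct \<times> nat) set set" where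
  "LOCAL_FPT c = {P. \<exists>s t. param_problem s t P \<and>
      (\<exists>(A :: bool lalg) f. computable f \<and> decides c s t A f P)}"

section \<open>LOCAL reductions\<close>

text \<open>Output of a node v of G: the vertices x of G' with nu(x) = v (with their unary labels),
  and edges {x,y} of G' with x hosted at v, together with the path eta({x,y}) of G
  (a vertex list from v to nu(y)) and the binary labels, plus k'.\<close>
record rout =
  r_k :: nat
  r_hosts :: "nat set"
  r_ulab :: "nat \<Rightarrow> nat \<Rightarrow> bool"
  r_edges :: "(nat \<times> nat \<times> nat list) set"
  r_blab :: "nat \<Rightarrow> nat \<Rightarrow> nat \<Rightarrow> bool"

definition image_struct :: "(nat \<Rightarrow> rout) \<Rightarrow> nat set \<Rightarrow> lstruct" where
  "image_struct Out V = \<lparr> sverts = (\<Union>v\<in>V. r_hosts (Out v)),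
     sadj = (\<lambda>x y. \<exists>v\<in>V. \<exists>p. (x, y, p) \<in> r_edges (Out v) \<or> (y, x, p) \<in> r_edges (Out v)),
     sunary = (\<lambda>i x. \<exists>v\<in>V. x \<in> r_hosts (Out v) \<and> r_ulab (Out v) i x),
     sbinary = (\<lambda>i x y. \<exists>v\<in>V. x \<in> r_hosts (Out v) \<and> r_blab (Out v) i x y) \<rparr>"

definition is_path :: "lstruct \<Rightarrow> nat list \<Rightarrow> nat \<Rightarrow> nat \<Rightarrow> bool" where
  "is_path G p u v \<longleftrightarrow> p \<noteq> [] \<and> hd p = u \<and> last p = v \<and> distinct p \<and> set p \<subseteq> sverts G \<and>
     (\<forall>i. Suc i < length p \<longrightarrow> sadj G (p ! i) (p ! Suc i))"

definition valid_red_output :: "lstruct \<Rightarrow> (nat \<Rightarrow> rout) \<Rightarrow> nat \<Rightarrow> bool" where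
  "valid_red_output G Out R \<longleftrightarrow>
     (\<forall>u\<in>sverts G. \<forall>v\<in>sverts G. u \<noteq> v \<longrightarrow> r_hosts (Out u) \<inter> r_hosts (Out v) = {}) \<and>
     (\<forall>v\<in>sverts G. \<forall>(x, y, p)\<in>r_edges (Out v). x \<in> r_hosts (Out v) \<and>
        (\<exists>u\<in>sverts G. y \<in> r_hosts (Out u) \<and> is_path G p v u \<and> length p \<le> Suc R))"

definition local_reduces :: "nat \<Rightarrow> nat \<Rightarrow> nat \<Rightarrow> nat \<Rightarrow> nat \<Rightarrow>
     (lstruct \<times> nat) set \<Rightarrow> (lstruct \<times> nat) set \<Rightarrow> bool" where
  "local_reduces c s1 t1 s2 t2 P1 P2 \<longleftrightarrow>
     (\<exists>(A :: rout lalg) sf rf tf pf.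
        computable sf \<and> computable rf \<and> computable tf \<and> computable pf \<and>
        (\<forall>G k. wf_struct s1 t1 G \<longrightarrow> valid_ids c G \<longrightarrow>
           (let Out = (\<lambda>v. a_out A (lrun A k G (tf k) v)); G' = image_struct Out (sverts G)
            in \<exists>k'. (\<forall>v\<in>sverts G. r_k (Out v) = k') \<and>
                  valid_red_output G Out (rf k) \<and> wf_struct s2 t2 G' \<and>
                  card (sverts G') \<le> card (sverts G) ^ sf k \<and> k' \<le> pf k \<and>
                  ((G, k) \<in> P1 \<longleftrightarrow> (G', k') \<in> P2))))"

section \<open>Circuits as labelled graphs (6 unary predicates, 1 binary predicate)\<close>

text \<open>Unary predicate 0: input gate; 1: negation; 2: small or; 3: small and;
  4: large or; 5: large and. Binary predicate 0: wire orientation (arc x y = wire from x to y).\<close>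

abbreviation arc :: "lstruct \<Rightarrow> nat \<Rightarrow> nat \<Rightarrow> bool" where
  "arc C x y \<equiv> sbinary C 0 x y"

definition is_circuit :: "lstruct \<Rightarrow> bool" where
  "is_circuit C \<longleftrightarrow> wf_struct 6 1 C \<and>
     (\<forall>x y. sadj C x y \<longrightarrow> arc C x y \<or> arc C y x) \<and>
     (\<forall>x y. arc C x y \<longrightarrow> \<not> arc C y x) \<and>
     (\<forall>x. (x, x) \<notin> {(a, b). arc C a b}\<^sup>+) \<and>
     (\<forall>x\<in>sverts C. \<exists>!i. sunary C i x) \<and>
     (\<forall>x\<in>sverts C.
        (card {y. arc C y x} = 0 \<longleftrightarrow> sunary C 0 x) \<and>
        (card {y. arc C y x} = 1 \<longleftrightarrow> sunary C 1 x) \<and>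
        (card {y. arc C y x} = 2 \<longleftrightarrow> sunary C 2 x \<or> sunary C 3 x) \<and>
        (card {y. arc C y x} \<ge> 3 \<longleftrightarrow> sunary C 4 x \<or> sunary C 5 x)) \<and>
     (\<exists>!z. z \<in> sverts C \<and> (\<forall>y. \<not> arc C z y))"

definition circ_out :: "lstruct \<Rightarrow> nat" where
  "circ_out C = (THE z. z \<in> sverts C \<and> (\<forall>y. \<not> arc C z y))"

definition circ_inputs :: "lstruct \<Rightarrow> nat set" where
  "circ_inputs C = {x \<in> sverts C. sunary C 0 x}"

text \<open>Gate values under the input vector whose ones are exactly the input gates in S.\<close>
inductive cval :: "lstruct \<Rightarrow> nat set \<Rightarrow> nat \<Rightarrow> bool \<Rightarrow> bool" for C S where
  inp: "sunary C 0 x \<Longrightarrow> cval C S x (x \<in> S)"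
| neg: "sunary C 1 x \<Longrightarrow> arc C y x \<Longrightarrow> cval C S y b \<Longrightarrow> cval C S x (\<not> b)"
| or_t: "sunary C 2 x \<or> sunary C 4 x \<Longrightarrow> arc C y x \<Longrightarrow> cval C S y True \<Longrightarrow> cval C S x True"
| or_f: "sunary C 2 x \<or> sunary C 4 x \<Longrightarrow> (\<forall>y. arc C y x \<longrightarrow> cval C S y False) \<Longrightarrow> cval C S x False"
| and_t: "sunary C 3 x \<or> sunary C 5 x \<Longrightarrow> (\<forall>y. arc C y x \<longrightarrow> cval C S y True) \<Longrightarrow> cval C S x True"
| and_f: "sunary C 3 x \<or> sunary C 5 x \<Longrightarrow> arc C y x \<Longrightarrow> cval C S y False \<Longrightarrow> cval C S x False"

definition circ_accepts :: "lstruct \<Rightarrow> nat set \<Rightarrow> bool" where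
  "circ_accepts C S \<longleftrightarrow> cval C S (circ_out C) True"

definition io_path :: "lstruct \<Rightarrow> nat list \<Rightarrow> bool" where
  "io_path C xs \<longleftrightarrow> xs \<noteq> [] \<and> sunary C 0 (hd xs) \<and> last xs = circ_out C \<and>
     (\<forall>i. Suc i < length xs \<longrightarrow> arc C (xs ! i) (xs ! Suc i))"

definition large_gate :: "lstruct \<Rightarrow> nat \<Rightarrow> bool" where
  "large_gate C x \<longleftrightarrow> sunary C 4 x \<or> sunary C 5 x"

definition circ_depth_le :: "lstruct \<Rightarrow> nat \<Rightarrow> bool" where
  "circ_depth_le C d \<longleftrightarrow> (\<forall>xs. io_path C xs \<longrightarrow> length xs \<le> d)"

definition circ_weft_le :: "lstruct \<Rightarrow> nat \<Rightarrow> bool" where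
  "circ_weft_le C w \<longleftrightarrow> (\<forall>xs. io_path C xs \<longrightarrow> length (filter (large_gate C) xs) \<le> w)"

definition circuit_problem :: "lstruct set \<Rightarrow> (lstruct \<times> nat) set" where
  "circuit_problem F = {(C, k). C \<in> F \<and>
      (\<exists>S. S \<subseteq> circ_inputs C \<and> card S = k \<and> circ_accepts C S)}"

definition Weft :: "nat \<Rightarrow> (lstruct \<times> nat) set set" where
  "Weft w = {circuit_problem F | F.
      (\<forall>C\<in>F. is_circuit C) \<and>
      (\<forall>C H. C \<in> F \<longrightarrow> is_circuit H \<longrightarrow> struct_iso C H \<longrightarrow> H \<in> F) \<and>
      (\<exists>d. \<forall>C\<in>F. circ_depth_le C d \<and> circ_weft_le C w)}"

definition LOCAL_WEFT :: "nat \<Rightarrow> nat \<Rightarrow> (lstruct \<times> nat) set set" where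
  "LOCAL_WEFT c w = {P. \<exists>s t. param_problem s t P \<and>
      (\<exists>P2\<in>Weft w. local_reduces c s t 6 1 P P2)}"

end

theory Submission
  imports Defs "HOL-Library.Nat_Bijection"
begin

inductive near :: "(nat \<Rightarrow> nat \<Rightarrow> bool) \<Rightarrow> nat \<Rightarrow> nat \<Rightarrow> nat \<Rightarrow> bool" for E where
  near0: "near E n u u"
| nearS: "E u w \<Longrightarrow> near E n w v \<Longrightarrow> near E (Suc n) u v"

lemma near_mono_n: "near E n u v \<Longrightarrow> n \<le> m \<Longrightarrow> near E m u v"
proof (induction arbitrary: m rule: near.induct)
  case (near0 n u) then show ?case by (auto intro: near.intros)
next
  case (nearS u w n v)
  then obtain m' where "m = Suc m'" "n \<le> m'" by (cases m) auto
  then show ?case using nearS by (auto intro: near.nearS)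
qed

lemma near_trans: "near E n u w \<Longrightarrow> near E m w v \<Longrightarrow> near E (n + m) u v"
proof (induction rule: near.induct)
  case (near0 n u)
  then show ?case using near_mono_n by fastforce
next
  case (nearS u w n v)
  then show ?case by (auto intro: near.nearS)
qed

lemma near_snoc: "near E n u w \<Longrightarrow> E w v \<Longrightarrow> near E (Suc n) u v"
proof (induction rule: near.induct)
  case (near0 n u)
  then show ?case by (meson near.near0 near.nearS)
next
  case (nearS u w n v)
  then show ?case by (auto intro: near.nearS)
qed

lemma near_sym: "near E n u v \<Longrightarrow> (\<And>x y. E x y \<Longrightarrow> E y x) \<Longrightarrow> near E n v u"
proof (induction rule: near.induct)
  case (near0 n u)
  then show ?case by (auto intro: near.intros)
next
  case (nearS u w n v)
  then show ?case by (auto intro: near_snoc)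
qed

lemma near_monoE: "near E n u v \<Longrightarrow> (\<And>x y. E x y \<Longrightarrow> F x y) \<Longrightarrow> near F n u v"
  by (induction rule: near.induct) (auto intro: near.intros)

lemma near_Suc_iff: "near E (Suc n) u v \<longleftrightarrow> near E n u v \<or> (\<exists>w. E u w \<and> near E n w v)"
proof
  assume "near E (Suc n) u v"
  then show "near E n u v \<or> (\<exists>w. E u w \<and> near E n w v)"
    by (cases rule: near.cases) (auto intro: near.intros)
next
  assume "near E n u v \<or> (\<exists>w. E u w \<and> near E n w v)"
  then show "near E (Suc n) u v"
    by (auto intro: near.intros near_mono_n)
qed

lemma near_in: "near E n u v \<Longrightarrow> (\<And>x y. E x y \<Longrightarrow> y \<in> S) \<Longrightarrow> u \<in> S \<Longrightarrow> v \<in> S"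
  by (induction rule: near.induct) auto

lemma succ_near: "successively E ys \<Longrightarrow> ys \<noteq> [] \<Longrightarrow> near E (length ys - 1) (hd ys) (last ys)"
proof (induction ys rule: induct_list012)
  case 1 then show ?case by simp
next
  case (2 x) then show ?case by (simp add: near.near0)
next
  case (3 x y xs)
  then show ?case by (auto intro: near.nearS)
qed

section \<open>Circuits have small radius\<close>

lemma circ_back:
  assumes "is_circuit C" "x \<in> sverts C"
  shows "\<exists>ys. ys \<noteq> [] \<and> successively (arc C) ys \<and> sunary C 0 (hd ys) \<and> last ys = x"
proof -
  let ?r = "{(a, b). arc C a b}"
  have wfC: "wf_struct 6 1 C" using assms(1) unfolding is_circuit_def by blast
  have sub: "?r \<subseteq> sverts C \<times> sverts C" using wfC unfolding wf_struct_def by blast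
  have fin: "finite ?r" using sub wfC unfolding wf_struct_def by (meson finite_SigmaI finite_subset)
  have acyc: "acyclic ?r" using assms(1) unfolding is_circuit_def acyclic_def by blast
  have wfr: "wf ?r" using fin acyc by (rule finite_acyclic_wf)
  show ?thesis using assms(2)
  proof (induction x rule: wf_induct[OF wfr])
    case (1 x)
    show ?case
    proof (cases "sunary C 0 x")
      case True
      then show ?thesis by (intro exI[of _ "[x]"]) auto
    next
      case False
      then have "card {y. arc C y x} \<noteq> 0" using assms(1) 1(2) unfolding is_circuit_def by blast
      then obtain y where y: "arc C y x" by (metis (no_types, lifting) card.empty empty_Collect_eq)
      then have "y \<in> sverts C" using sub by blast
      then obtain ys where ys: "ys \<noteq> [] \<and> successively (arc C) ys \<and> sunary C 0 (hd ys) \<and> last ys = y"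
        using 1(1) y by blast
      show ?thesis
        by (intro exI[of _ "ys @ [x]"]) (use ys y in \<open>auto simp: successively_append_iff\<close>)
    qed
  qed
qed

lemma circ_fwd:
  assumes "is_circuit C" "x \<in> sverts C"
  shows "\<exists>ys. ys \<noteq> [] \<and> successively (arc C) ys \<and> hd ys = x \<and> last ys = circ_out C"
proof -
  let ?r = "{(a, b). arc C a b}"
  have wfC: "wf_struct 6 1 C" using assms(1) unfolding is_circuit_def by blast
  have sub: "?r \<subseteq> sverts C \<times> sverts C" using wfC unfolding wf_struct_def by blast
  have fin: "finite ?r" using sub wfC unfolding wf_struct_def by (meson finite_SigmaI finite_subset)
  have acyc: "acyclic ?r" using assms(1) unfolding is_circuit_def acyclic_def by blast
  have wfr: "wf (?r\<inverse>)" using fin acyc by (rule finite_acyclic_wf_converse)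
  have uniq: "\<exists>!z. z \<in> sverts C \<and> (\<forall>y. \<not> arc C z y)" using assms(1) unfolding is_circuit_def by blast
  have outp: "circ_out C \<in> sverts C \<and> (\<forall>y. \<not> arc C (circ_out C) y)"
    unfolding circ_out_def using theI'[OF uniq] .
  show ?thesis using assms(2)
  proof (induction x rule: wf_induct[OF wfr])
    case (1 x)
    show ?case
    proof (cases "\<forall>y. \<not> arc C x y")
      case True
      then have "x = circ_out C" using uniq outp 1(2) by blast
      then show ?thesis by (intro exI[of _ "[x]"]) auto
    next
      case False
      then obtain y where y: "arc C x y" by blast
      then have "y \<in> sverts C" using sub by blast
      then obtain ys where ys: "ys \<noteq> [] \<and> successively (arc C) ys \<and> hd ys = y \<and> last ys = circ_out C"
        using 1(1) y by blast
      show ?thesis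
        by (intro exI[of _ "x # ys"]) (use ys y in \<open>cases ys; auto\<close>)
    qed
  qed
qed

lemma circ_radius:
  assumes "is_circuit C" "circ_depth_le C d" "x \<in> sverts C"
  shows "near (sadj C) d x (circ_out C)"
proof -
  obtain xs where xs: "xs \<noteq> [] \<and> successively (arc C) xs \<and> sunary C 0 (hd xs) \<and> last xs = x"
    using circ_back[OF assms(1,3)] by blast
  obtain ys where ys: "ys \<noteq> [] \<and> successively (arc C) ys \<and> hd ys = x \<and> last ys = circ_out C"
    using circ_fwd[OF assms(1,3)] by blast
  have "successively (arc C) (xs @ tl ys)"
    using xs ys by (cases ys) (auto simp: successively_append_iff successively_Cons)
  moreover have "last (xs @ tl ys) = circ_out C"
    using xs ys by (cases ys) (auto simp: last_append)
  moreover have "hd (xs @ tl ys) = hd xs" using xs by simp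
  ultimately have "io_path C (xs @ tl ys)"
    unfolding io_path_def using xs by (simp add: successively_conv_nth)
  then have "length (xs @ tl ys) \<le> d" using assms(2) unfolding circ_depth_le_def by blast
  then have len: "length ys - 1 \<le> d" using xs ys by (cases ys) auto
  have "near (arc C) (length ys - 1) x (circ_out C)" using succ_near[of "arc C" ys] ys by auto
  then have "near (arc C) d x (circ_out C)" using len near_mono_n by blast
  then show ?thesis
    by (rule near_monoE) (use assms(1) in \<open>auto simp: is_circuit_def wf_struct_def\<close>)
qed


section \<open>Reductions: geometry of the image structure\<close>

lemma path_near: "is_path G p a b \<Longrightarrow> near (sadj G) (length p - 1) a b"
  unfolding is_path_def using succ_near[of "sadj G" p] by (auto simp: successively_conv_nth)

lemma host_uniq:
  assumes "valid_red_output G Out R" "u1 \<in> sverts G" "u2 \<in> sverts G"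
    "x \<in> r_hosts (Out u1)" "x \<in> r_hosts (Out u2)"
  shows "u1 = u2"
  using assms unfolding valid_red_output_def by blast

lemma edgeE:
  assumes val: "valid_red_output G Out R" and wfG: "wf_struct s t G" and V: "V \<subseteq> sverts G"
    and e: "sadj (image_struct Out V) x y"
  shows "\<exists>wx wy. wx \<in> sverts G \<and> wy \<in> sverts G \<and> x \<in> r_hosts (Out wx) \<and> y \<in> r_hosts (Out wy) \<and>
     near (sadj G) R wx wy \<and> (wx \<in> V \<or> wy \<in> V)"
proof -
  have symG: "\<And>a b. sadj G a b \<Longrightarrow> sadj G b a" using wfG unfolding wf_struct_def by blast
  have key: "\<exists>u\<in>sverts G. b \<in> r_hosts (Out u) \<and> a \<in> r_hosts (Out w) \<and> near (sadj G) R w u"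
    if "w \<in> V" "(a, b, p) \<in> r_edges (Out w)" for w a b p
  proof -
    have "w \<in> sverts G" using that V by blast
    then have "\<forall>(x, y, p)\<in>r_edges (Out w). x \<in> r_hosts (Out w) \<and>
        (\<exists>u\<in>sverts G. y \<in> r_hosts (Out u) \<and> is_path G p w u \<and> length p \<le> Suc R)"
      using val unfolding valid_red_output_def by blast
    then have "a \<in> r_hosts (Out w) \<and>
        (\<exists>u\<in>sverts G. b \<in> r_hosts (Out u) \<and> is_path G p w u \<and> length p \<le> Suc R)"
      using that(2) by fast
    then obtain u where u: "u \<in> sverts G" "b \<in> r_hosts (Out u)" "is_path G p w u" "length p \<le> Suc R"
      "a \<in> r_hosts (Out w)" by blast
    have "near (sadj G) (length p - 1) w u" using path_near u(3) .
    then have "near (sadj G) R w u" using u(4) near_mono_n by fastforce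
    then show ?thesis using u by blast
  qed
  from e have "\<exists>w\<in>V. \<exists>p. (x, y, p) \<in> r_edges (Out w) \<or> (y, x, p) \<in> r_edges (Out w)"
    by (simp add: image_struct_def)
  then obtain w p where w: "w \<in> V" "(x, y, p) \<in> r_edges (Out w) \<or> (y, x, p) \<in> r_edges (Out w)"
    by blast
  from w(2) show ?thesis
  proof
    assume a: "(x, y, p) \<in> r_edges (Out w)"
    obtain u where "u \<in> sverts G" "y \<in> r_hosts (Out u)" "x \<in> r_hosts (Out w)" "near (sadj G) R w u"
      using key[OF w(1) a] by blast
    moreover have "w \<in> sverts G" using V w(1) by blast
    ultimately show ?thesis using w(1) by blast
  next
    assume a: "(y, x, p) \<in> r_edges (Out w)"
    obtain u where u: "u \<in> sverts G" "x \<in> r_hosts (Out u)" "y \<in> r_hosts (Out w)" "near (sadj G) R w u"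
      using key[OF w(1) a] by blast
    have "near (sadj G) R u w" using near_sym[OF u(4) symG] .
    moreover have "w \<in> sverts G" using V w(1) by blast
    ultimately show ?thesis using w(1) u by blast
  qed
qed

lemma edge_transfer:
  assumes val: "valid_red_output G Out R" and V: "V \<subseteq> sverts G"
    and e: "sadj (image_struct Out V) x y"
    and V': "\<forall>u\<in>sverts G. (x \<in> r_hosts (Out u) \<or> y \<in> r_hosts (Out u)) \<longrightarrow> u \<in> V'"
  shows "sadj (image_struct Out V') x y"
proof -
  from e have "\<exists>w\<in>V. \<exists>p. (x, y, p) \<in> r_edges (Out w) \<or> (y, x, p) \<in> r_edges (Out w)"
    by (simp add: image_struct_def)
  then obtain w p where w: "w \<in> V" "(x, y, p) \<in> r_edges (Out w) \<or> (y, x, p) \<in> r_edges (Out w)"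
    by blast
  have ws: "w \<in> sverts G" using w V by blast
  have fa: "\<forall>(a, b, q)\<in>r_edges (Out w). a \<in> r_hosts (Out w)"
    using val ws unfolding valid_red_output_def by fast
  have "x \<in> r_hosts (Out w) \<or> y \<in> r_hosts (Out w)"
    using w(2) fa by fast
  then have "w \<in> V'" using V' ws by blast
  then show ?thesis using w(2) by (simp add: image_struct_def) blast
qed

lemma far_bound:
  assumes val: "valid_red_output G Out R" and wfG: "wf_struct s t G" and V: "V \<subseteq> sverts G"
  shows "near (sadj (image_struct Out V)) n a x \<Longrightarrow> va \<in> sverts G \<Longrightarrow> a \<in> r_hosts (Out va) \<Longrightarrow>
     ua \<in> sverts G \<Longrightarrow> x \<in> r_hosts (Out ua) \<Longrightarrow> near (sadj G) (n * R) va ua"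
proof (induction arbitrary: va rule: near.induct)
  case (near0 n u)
  then have "va = ua" using host_uniq[OF val] by blast
  then show ?case by (auto intro: near.intros)
next
  case (nearS a w n x)
  obtain wx wy where h: "wx \<in> sverts G" "wy \<in> sverts G" "a \<in> r_hosts (Out wx)" "w \<in> r_hosts (Out wy)"
    "near (sadj G) R wx wy" using edgeE[OF val wfG V nearS(1)] by blast
  have "wx = va" using host_uniq[OF val] h nearS by blast
  have "near (sadj G) (n * R) wy ua" using nearS h by blast
  then have "near (sadj G) (R + n * R) va ua" using near_trans h(5) \<open>wx = va\<close> by blast
  then show ?case by (simp add: add.commute)
qed

lemma image_all:
  assumes val: "valid_red_output G Out R" and V: "V \<subseteq> sverts G"
    and cov: "\<forall>u\<in>sverts G. r_hosts (Out u) \<noteq> {} \<longrightarrow> u \<in> V"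
  shows "image_struct Out V = image_struct Out (sverts G)"
proof -
  have hv: "u \<in> V" if "u \<in> sverts G" "(x, y, p) \<in> r_edges (Out u)" for u x y p
  proof -
    have "\<forall>(a, b, q)\<in>r_edges (Out u). a \<in> r_hosts (Out u)"
      using val that(1) unfolding valid_red_output_def by fast
    then have "x \<in> r_hosts (Out u)" using that(2) by fast
    then show ?thesis using cov that(1) by blast
  qed
  have e1: "(\<Union>v\<in>V. r_hosts (Out v)) = (\<Union>v\<in>sverts G. r_hosts (Out v))"
    using V cov by blast
  have e2: "(\<lambda>x y. \<exists>v\<in>V. \<exists>p. (x, y, p) \<in> r_edges (Out v) \<or> (y, x, p) \<in> r_edges (Out v)) =
            (\<lambda>x y. \<exists>v\<in>sverts G. \<exists>p. (x, y, p) \<in> r_edges (Out v) \<or> (y, x, p) \<in> r_edges (Out v))"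
    using V hv by (intro ext) blast
  have e3: "(\<lambda>i x. \<exists>v\<in>V. x \<in> r_hosts (Out v) \<and> r_ulab (Out v) i x) =
            (\<lambda>i x. \<exists>v\<in>sverts G. x \<in> r_hosts (Out v) \<and> r_ulab (Out v) i x)"
    using V cov by (intro ext) blast
  have e4: "(\<lambda>i x y. \<exists>v\<in>V. x \<in> r_hosts (Out v) \<and> r_blab (Out v) i x y) =
            (\<lambda>i x y. \<exists>v\<in>sverts G. x \<in> r_hosts (Out v) \<and> r_blab (Out v) i x y)"
    using V cov by (intro ext) blast
  show ?thesis
    unfolding image_struct_def using e1 e2 e3 e4 by simp
qed

lemma image_comp: "image_struct (\<lambda>v. g (h v)) V = image_struct g (h ` V)"
  unfolding image_struct_def by auto


section \<open>The simulating LOCAL algorithm\<close>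

definition enc :: "nat \<Rightarrow> nat \<Rightarrow> nat \<Rightarrow> nat set \<Rightarrow> nat" where
  "enc k r s M = prod_encode (k, prod_encode (r, prod_encode (s, set_encode M)))"

definition dk :: "nat \<Rightarrow> nat" where "dk st = fst (prod_decode st)"
definition dr :: "nat \<Rightarrow> nat" where "dr st = fst (prod_decode (snd (prod_decode st)))"
definition ds :: "nat \<Rightarrow> nat" where "ds st = fst (prod_decode (snd (prod_decode (snd (prod_decode st)))))"
definition dM :: "nat \<Rightarrow> nat set" where
  "dM st = set_decode (snd (prod_decode (snd (prod_decode (snd (prod_decode st))))))"

lemma dec_enc [simp]:
  "dk (enc k r s M) = k" "dr (enc k r s M) = r" "ds (enc k r s M) = s"
  "finite M \<Longrightarrow> dM (enc k r s M) = M"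
  unfolding enc_def dk_def dr_def ds_def dM_def by (simp_all add: set_encode_inverse)

lemma set_decode_zero [simp]: "set_decode 0 = {}"
  by (metis set_encode_empty set_encode_inverse finite.emptyI)

definition simB :: "rout lalg \<Rightarrow> (nat \<Rightarrow> nat) \<Rightarrow> (lstruct \<times> nat) set \<Rightarrow> bool lalg" where
  "simB A T P2 = \<lparr>
     a_init = (\<lambda>k v lab N b1 b2. enc k 0 (a_init A k v lab N b1 b2)
                 (if T k = 0 then {a_init A k v lab N b1 b2} else {})),
     a_msg = (\<lambda>st w. if dr st < T (dk st) then a_msg A (ds st) w else set_encode (dM st)),
     a_step = (\<lambda>st m. if dr st < T (dk st)
                 then enc (dk st) (Suc (dr st)) (a_step A (ds st) m)
                        (if Suc (dr st) = T (dk st) then {a_step A (ds st) m} else {})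
                 else enc (dk st) (Suc (dr st)) (ds st) (dM st \<union> (\<Union>w. set_decode (m w)))),
     a_out = (\<lambda>st. r_hosts (a_out A (ds st)) \<noteq> {} \<and>
                 (image_struct (a_out A) (dM st), r_k (a_out A (ds st))) \<in> P2) \<rparr>"

lemma simB_simps:
  "a_init (simB A T P2) k v lab N b1 b2 = enc k 0 (a_init A k v lab N b1 b2)
                 (if T k = 0 then {a_init A k v lab N b1 b2} else {})"
  "a_msg (simB A T P2) st w = (if dr st < T (dk st) then a_msg A (ds st) w else set_encode (dM st))"
  "a_step (simB A T P2) st m = (if dr st < T (dk st)
                 then enc (dk st) (Suc (dr st)) (a_step A (ds st) m)
                        (if Suc (dr st) = T (dk st) then {a_step A (ds st) m} else {})
                 else enc (dk st) (Suc (dr st)) (ds st) (dM st \<union> (\<Union>w. set_decode (m w))))"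
  "a_out (simB A T P2) st = (r_hosts (a_out A (ds st)) \<noteq> {} \<and>
                 (image_struct (a_out A) (dM st), r_k (a_out A (ds st))) \<in> P2)"
  unfolding simB_def by simp_all

lemma sim1:
  "r \<le> T k \<Longrightarrow> lrun (simB A T P2) k G r v =
     enc k r (lrun A k G r v) (if r = T k then {lrun A k G r v} else {})"
proof (induction r arbitrary: v)
  case 0
  then show ?case by (simp add: simB_simps)
next
  case (Suc r)
  then have lt: "r < T k" by simp
  have IH: "\<And>w. lrun (simB A T P2) k G r w = enc k r (lrun A k G r w) {}"
    using Suc lt by simp
  have msg: "(\<lambda>w. if sadj G v w then a_msg (simB A T P2) (lrun (simB A T P2) k G r w) v else 0) =
             (\<lambda>w. if sadj G v w then a_msg A (lrun A k G r w) v else 0)"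
    using lt by (intro ext) (simp add: IH simB_simps)
  show ?case using lt by (simp only: lrun.simps msg) (simp add: IH simB_simps)
qed

definition ball :: "lstruct \<Rightarrow> nat \<Rightarrow> nat \<Rightarrow> nat set" where
  "ball G j v = {u. near (sadj G) j v u}"

lemma ball_fin:
  assumes "wf_struct s t G" shows "finite (ball G j v)"
proof -
  have "ball G j v \<subseteq> insert v (sverts G)"
  proof
    fix u assume "u \<in> ball G j v"
    then have "near (sadj G) j v u" by (simp add: ball_def)
    then show "u \<in> insert v (sverts G)"
      by (rule near_in) (use assms in \<open>auto simp: wf_struct_def\<close>)
  qed
  then show ?thesis using assms unfolding wf_struct_def by (meson finite_insert finite_subset)
qed

lemma ball_Suc: "ball G (Suc j) v = ball G j v \<union> (\<Union>w\<in>{w. sadj G v w}. ball G j w)"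
  unfolding ball_def using near_Suc_iff[of "sadj G" j v] by blast

lemma sim2:
  assumes wfG: "wf_struct s t G"
  shows "lrun (simB A T P2) k G (T k + j) v =
     enc k (T k + j) (lrun A k G (T k) v) ((\<lambda>u. lrun A k G (T k) u) ` ball G j v)"
proof (induction j arbitrary: v)
  case 0
  have "ball G 0 v = {v}" unfolding ball_def by (auto intro: near.intros elim: near.cases)
  moreover have "lrun (simB A T P2) k G (T k) v =
     enc k (T k) (lrun A k G (T k) v) (if T k = T k then {lrun A k G (T k) v} else {})"
    by (rule sim1) simp
  ultimately show ?case by simp
next
  case (Suc j)
  let ?f = "\<lambda>u. lrun A k G (T k) u"
  have fin: "\<And>w. finite (?f ` ball G j w)" using ball_fin[OF wfG] by blast
  have msg: "(\<lambda>w. if sadj G v w then a_msg (simB A T P2) (lrun (simB A T P2) k G (T k + j) w) v else 0) =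
             (\<lambda>w. if sadj G v w then set_encode (?f ` ball G j w) else 0)"
    by (intro ext) (simp add: Suc simB_simps fin)
  have un: "(\<Union>w. set_decode (if sadj G v w then set_encode (?f ` ball G j w) else 0)) =
            (\<Union>w\<in>{w. sadj G v w}. ?f ` ball G j w)"
    using fin by (auto simp: set_encode_inverse split: if_splits) blast
  have "lrun (simB A T P2) k G (T k + Suc j) v =
        a_step (simB A T P2) (lrun (simB A T P2) k G (T k + j) v)
          (\<lambda>w. if sadj G v w then set_encode (?f ` ball G j w) else 0)"
    by (simp only: add_Suc_right lrun.simps msg)
  also have "\<dots> = enc k (Suc (T k + j)) (?f v) (?f ` ball G j v \<union>
        (\<Union>w. set_decode (if sadj G v w then set_encode (?f ` ball G j w) else 0)))"
    by (simp add: Suc simB_simps fin)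
  also have "\<dots> = enc k (T k + Suc j) (?f v) (?f ` ball G (Suc j) v)"
    by (simp only: un ball_Suc image_Un image_UN) simp
  finally show ?case .
qed


section \<open>Computability of the round bound\<close>

definition addR :: recf where "addR = RPr (RP 0) (RC RS [RP 0])"
definition mulR :: recf where "mulR = RPr RZ (RC addR [RP 0, RP 2])"
fun constR :: "nat \<Rightarrow> recf" where
  "constR 0 = RZ"
| "constR (Suc c) = RC RS [constR c]"

lemma reval_add: "reval addR [n, m] (n + m)"
proof (induction n)
  case 0
  have "reval (RP 0) [m] ([m] ! 0)" by (rule reval.proj) simp
  then show ?case unfolding addR_def by (auto intro: reval.pr0)
next
  case (Suc n)
  have "reval (RP 0) [n + m, n, m] ([n + m, n, m] ! 0)" by (rule reval.proj) simp
  then have "reval (RC RS [RP 0]) [n + m, n, m] (Suc (n + m))"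
    by (auto intro!: reval.comp[where ys="[n + m]"] reval.succ)
  then show ?case using Suc unfolding addR_def by (auto intro: reval.prS)
qed

lemma reval_mul: "reval mulR [n, m] (n * m)"
proof (induction n)
  case 0
  then show ?case unfolding mulR_def by (auto intro: reval.pr0 reval.zero)
next
  case (Suc n)
  have p0: "reval (RP 0) [n * m, n, m] ([n * m, n, m] ! 0)" by (rule reval.proj) simp
  have p2: "reval (RP 2) [n * m, n, m] ([n * m, n, m] ! 2)" by (rule reval.proj) simp
  have "reval (RC addR [RP 0, RP 2]) [n * m, n, m] (n * m + m)"
    using p0 p2 reval_add[of "n * m" m] by (auto intro!: reval.comp[where ys="[n * m, m]"])
  then have "reval (RC addR [RP 0, RP 2]) [n * m, n, m] (Suc n * m)" by (simp add: add.commute)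
  then show ?case using Suc unfolding mulR_def by (auto intro: reval.prS)
qed

lemma reval_const: "reval (constR c) xs c"
  by (induction c) (auto intro: reval.zero reval.succ reval.comp[where ys="[_]"])

lemma computable_comb:
  assumes "computable f" "computable g"
  shows "computable (\<lambda>n. f n + c * g n)"
proof -
  obtain rf where rf: "\<And>n. reval rf [n] (f n)" using assms(1) unfolding computable_def by blast
  obtain rg where rg: "\<And>n. reval rg [n] (g n)" using assms(2) unfolding computable_def by blast
  have "reval (RC addR [rf, RC mulR [constR c, rg]]) [n] (f n + c * g n)" for n
  proof -
    have "reval (RC mulR [constR c, rg]) [n] (c * g n)"
      using reval_const[of c "[n]"] rg[of n] reval_mul[of c "g n"]
      by (auto intro!: reval.comp[where ys="[c, g n]"])
    then show ?thesis
      using rf[of n] reval_add[of "f n" "c * g n"]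
      by (auto intro!: reval.comp[where ys="[f n, c * g n]"])
  qed
  then show ?thesis unfolding computable_def by blast
qed


lemma sverts_image: "x \<in> sverts (image_struct Out W) \<longleftrightarrow> (\<exists>w\<in>W. x \<in> r_hosts (Out w))"
  by (simp add: image_struct_def)

lemma ball_sub: assumes "wf_struct s t G" "v \<in> sverts G" shows "ball G j v \<subseteq> sverts G"
proof
  fix u assume "u \<in> ball G j v"
  then have "near (sadj G) j v u" by (simp add: ball_def)
  then show "u \<in> sverts G" by (rule near_in) (use assms in \<open>auto simp: wf_struct_def\<close>)
qed

lemma circ_close:
  assumes val: "valid_red_output G Out R" and wfG: "wf_struct s t G"
    and W: "W \<subseteq> sverts G" "v \<in> W" and z0: "z0 \<in> r_hosts (Out v)"
    and C: "is_circuit (image_struct Out W)" "circ_depth_le (image_struct Out W) d"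
    and u: "u \<in> sverts G" "x \<in> r_hosts (Out u)" "x \<in> sverts (image_struct Out W)"
  shows "near (sadj G) ((d + d) * R) v u"
proof -
  let ?X = "image_struct Out W"
  have wfX: "wf_struct 6 1 ?X" using C(1) unfolding is_circuit_def by blast
  have symX: "\<And>a b. sadj ?X a b \<Longrightarrow> sadj ?X b a" using wfX unfolding wf_struct_def by blast
  have z0X: "z0 \<in> sverts ?X" using W z0 by (auto simp: sverts_image)
  have "near (sadj ?X) d z0 (circ_out ?X)" using circ_radius[OF C z0X] .
  moreover have "near (sadj ?X) d (circ_out ?X) x" using near_sym[OF circ_radius[OF C u(3)] symX] .
  ultimately have "near (sadj ?X) (d + d) z0 x" by (rule near_trans)
  moreover have "v \<in> sverts G" using W by blast
  ultimately show ?thesis using far_bound[OF val wfG W(1) _ _ z0 u(1) u(2)] by simp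
qed



lemma geo:
  assumes val: "valid_red_output G Out R" and wfG: "wf_struct s t G"
    and wfG': "wf_struct 6 1 (image_struct Out (sverts G))"
    and F: "\<forall>C\<in>F. is_circuit C \<and> circ_depth_le C d"
    and v: "v \<in> sverts G" and z0: "z0 \<in> r_hosts (Out v)"
    and mem: "image_struct Out (ball G ((2 * d + 1) * R) v) \<in> F \<or> image_struct Out (sverts G) \<in> F"
  shows "image_struct Out (ball G ((2 * d + 1) * R) v) = image_struct Out (sverts G)"
proof -
  let ?B = "ball G ((2 * d + 1) * R) v"
  let ?H = "image_struct Out ?B"
  let ?G' = "image_struct Out (sverts G)"
  have Bsub: "?B \<subseteq> sverts G" using ball_sub[OF wfG v] .
  have vB: "v \<in> ?B" unfolding ball_def by (auto intro: near.intros)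
  have inB: "u \<in> ?B" if "near (sadj G) ((d + d) * R + R) v u" for u
  proof -
    have "(d + d) * R + R = (2 * d + 1) * R" by (simp add: algebra_simps)
    then have "near (sadj G) ((2 * d + 1) * R) v u" using that by metis
    then show ?thesis unfolding ball_def by simp
  qed
  have inB': "u \<in> ?B" if "near (sadj G) ((d + d) * R) v u" for u
  proof -
    have "near (sadj G) ((d + d) * R + R) v u" using near_mono_n[OF that] by simp
    then show ?thesis by (rule inB)
  qed
  have cover: "\<forall>u\<in>sverts G. r_hosts (Out u) \<noteq> {} \<longrightarrow> u \<in> ?B"
    using mem
  proof
    assume HF: "?H \<in> F"
    have HC: "is_circuit ?H" "circ_depth_le ?H d" using HF F by auto
    have wfH: "wf_struct 6 1 ?H" using HC(1) unfolding is_circuit_def by blast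
    have all: "y \<in> sverts ?H" if "y \<in> sverts ?G'" for y
    proof -
      have z0G': "z0 \<in> sverts ?G'" using v z0 by (auto simp: sverts_image)
      have conn: "\<forall>x\<in>sverts ?G'. \<forall>y\<in>sverts ?G'. (x, y) \<in> {(a, b). sadj ?G' a b}\<^sup>*"
        using wfG' unfolding wf_struct_def by blast
      have "(z0, y) \<in> {(a, b). sadj ?G' a b}\<^sup>*" using conn z0G' that by blast
      then show ?thesis
      proof (induction rule: rtrancl_induct)
        case base
        then show ?case using vB z0 by (auto simp: sverts_image)
      next
        case (step x y)
        then have e: "sadj ?G' x y" by simp
        obtain wx where wx: "wx \<in> ?B" "x \<in> r_hosts (Out wx)" using step(3) by (auto simp: sverts_image)
        have wxG: "wx \<in> sverts G" using wx(1) Bsub by blast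
        have nwx: "near (sadj G) ((d + d) * R) v wx"
          by (rule circ_close[OF val wfG Bsub vB z0 HC(1) HC(2) wxG wx(2) step(3)])
        obtain wx' wy where h: "wx' \<in> sverts G" "wy \<in> sverts G" "x \<in> r_hosts (Out wx')"
          "y \<in> r_hosts (Out wy)" "near (sadj G) R wx' wy"
          using edgeE[OF val wfG _ e] by blast
        have "wx' = wx" by (rule host_uniq[OF val h(1) wxG h(3) wx(2)])
        then have "near (sadj G) ((d + d) * R + R) v wy" using near_trans[OF nwx] h(5) by simp
        then have wyB: "wy \<in> ?B" by (rule inB)
        have "\<forall>u\<in>sverts G. (x \<in> r_hosts (Out u) \<or> y \<in> r_hosts (Out u)) \<longrightarrow> u \<in> ?B"
        proof (intro ballI impI)
          fix u assume u: "u \<in> sverts G" "x \<in> r_hosts (Out u) \<or> y \<in> r_hosts (Out u)"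
          from u(2) show "u \<in> ?B"
          proof
            assume "x \<in> r_hosts (Out u)"
            then have "u = wx" by (rule host_uniq[OF val u(1) wxG _ wx(2)])
            then show ?thesis using wx(1) by simp
          next
            assume "y \<in> r_hosts (Out u)"
            then have "u = wy" by (rule host_uniq[OF val u(1) h(2) _ h(4)])
            then show ?thesis using wyB by simp
          qed
        qed
        then have "sadj ?H x y" by (rule edge_transfer[OF val order.refl e])
        then show ?case using wfH unfolding wf_struct_def by blast
      qed
    qed
    show ?thesis
    proof (intro ballI impI)
      fix u assume u: "u \<in> sverts G" "r_hosts (Out u) \<noteq> {}"
      then obtain y where y: "y \<in> r_hosts (Out u)" by blast
      then have "y \<in> sverts ?G'" using u by (auto simp: sverts_image)
      then have "y \<in> sverts ?H" by (rule all)
      then obtain w where w: "w \<in> ?B" "y \<in> r_hosts (Out w)" by (auto simp: sverts_image)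
      have "w \<in> sverts G" using w(1) Bsub by blast
      then have "u = w" by (rule host_uniq[OF val u(1) _ y w(2)])
      then show "u \<in> ?B" using w(1) by simp
    qed
  next
    assume GF: "?G' \<in> F"
    have GC: "is_circuit ?G'" "circ_depth_le ?G' d" using GF F by auto
    show ?thesis
    proof (intro ballI impI)
      fix u assume u: "u \<in> sverts G" "r_hosts (Out u) \<noteq> {}"
      then obtain y where y: "y \<in> r_hosts (Out u)" by blast
      then have yG: "y \<in> sverts ?G'" using u by (auto simp: sverts_image)
      have "near (sadj G) ((d + d) * R) v u"
        by (rule circ_close[OF val wfG order.refl v z0 GC(1) GC(2) u(1) y yG])
      then show "u \<in> ?B" by (rule inB')
    qed
  qed
  show ?thesis using image_all[OF val Bsub cover] .
qed


theorem mainTheorem4: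
  fixes c t :: nat
  assumes "c \<ge> 1" and "t \<ge> 1"
  shows "LOCAL_WEFT c t \<subseteq> LOCAL_FPT c"
proof
  fix P assume "P \<in> LOCAL_WEFT c t"
  then obtain s t' P2 where pp: "param_problem s t' P" and P2: "P2 \<in> Weft t"
    and red: "local_reduces c s t' 6 1 P P2" unfolding LOCAL_WEFT_def by blast
  from P2 obtain F d where P2F: "P2 = circuit_problem F" and Fc: "\<forall>C\<in>F. is_circuit C"
    and Fd: "\<forall>C\<in>F. circ_depth_le C d \<and> circ_weft_le C t" unfolding Weft_def by blast
  have FF: "\<forall>C\<in>F. is_circuit C \<and> circ_depth_le C d" using Fc Fd by blast
  have memF: "H \<in> F" if "(H, k) \<in> P2" for H k using that P2F unfolding circuit_problem_def by blast
  from red obtain A sf rf tf pf where ctf: "computable tf" and crf: "computable rf"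
    and H: "\<forall>G k. wf_struct s t' G \<longrightarrow> valid_ids c G \<longrightarrow>
           (let Out = (\<lambda>v. a_out A (lrun A k G (tf k) v)); G' = image_struct Out (sverts G)
            in \<exists>k'. (\<forall>v\<in>sverts G. r_k (Out v) = k') \<and>
                  valid_red_output G Out (rf k) \<and> wf_struct 6 1 G' \<and>
                  card (sverts G') \<le> card (sverts G) ^ sf k \<and> k' \<le> pf k \<and>
                  ((G, k) \<in> P \<longleftrightarrow> (G', k') \<in> P2))"
    unfolding local_reduces_def by blast
  define B where "B = simB A tf P2"
  define f where "f = (\<lambda>k. tf k + (2 * d + 1) * rf k)"
  have cf: "computable f" unfolding f_def by (rule computable_comb[OF ctf crf])
  have "decides c s t' B f P"
    unfolding decides_def
  proof (intro allI impI)
    fix G k assume wfG: "wf_struct s t' G" and vid: "valid_ids c G"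
    define Out where "Out = (\<lambda>v. a_out A (lrun A k G (tf k) v))"
    define G' where "G' = image_struct Out (sverts G)"
    obtain k' where kk: "\<forall>v\<in>sverts G. r_k (Out v) = k'" and val: "valid_red_output G Out (rf k)"
      and wfG': "wf_struct 6 1 G'" and eq: "(G, k) \<in> P \<longleftrightarrow> (G', k') \<in> P2"
      using H wfG vid unfolding Out_def G'_def Let_def by blast
    let ?R = "(2 * d + 1) * rf k"
    have outv: "a_out B (lrun B k G (f k) v) \<longleftrightarrow> r_hosts (Out v) \<noteq> {} \<and>
        (image_struct Out (ball G ?R v), r_k (Out v)) \<in> P2" for v
    proof -
      have "lrun B k G (f k) v = enc k (f k) (lrun A k G (tf k) v)
              ((\<lambda>u. lrun A k G (tf k) u) ` ball G ?R v)"
        using sim2[OF wfG, of A tf P2 k ?R v] unfolding B_def f_def by simp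
      moreover have "finite ((\<lambda>u. lrun A k G (tf k) u) ` ball G ?R v)"
        using ball_fin[OF wfG] by blast
      moreover have "image_struct (a_out A) ((\<lambda>u. lrun A k G (tf k) u) ` ball G ?R v) =
                     image_struct Out (ball G ?R v)"
        unfolding Out_def by (simp add: image_comp)
      ultimately show ?thesis by (simp add: B_def simB_simps Out_def)
    qed
    show "(G, k) \<in> P \<longleftrightarrow> (\<exists>v\<in>sverts G. a_out B (lrun B k G (f k) v))"
    proof
      assume "(G, k) \<in> P"
      then have G'P: "(G', k') \<in> P2" using eq by blast
      then have G'F: "G' \<in> F" by (rule memF)
      have "sverts G' \<noteq> {}" using wfG' unfolding wf_struct_def by blast
      then obtain z0 v where v: "v \<in> sverts G" "z0 \<in> r_hosts (Out v)"
        unfolding G'_def by (auto simp: sverts_image)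
      have "image_struct Out (ball G ?R v) = G'"
        unfolding G'_def by (rule geo[OF val wfG wfG'[unfolded G'_def] FF v]) (use G'F G'_def in simp)
      then have "a_out B (lrun B k G (f k) v)" using outv[of v] v kk G'P by auto
      then show "\<exists>v\<in>sverts G. a_out B (lrun B k G (f k) v)" using v by blast
    next
      assume "\<exists>v\<in>sverts G. a_out B (lrun B k G (f k) v)"
      then obtain v where v: "v \<in> sverts G" "a_out B (lrun B k G (f k) v)" by blast
      then have hv: "r_hosts (Out v) \<noteq> {}" and HP: "(image_struct Out (ball G ?R v), r_k (Out v)) \<in> P2"
        using outv by blast+
      from hv obtain z0 where z0: "z0 \<in> r_hosts (Out v)" by blast
      have "image_struct Out (ball G ?R v) \<in> F" using HP by (rule memF)
      then have "image_struct Out (ball G ?R v) = G'"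
        unfolding G'_def by (intro geo[OF val wfG wfG'[unfolded G'_def] FF v(1) z0]) simp
      then have "(G', k') \<in> P2" using HP kk v(1) by auto
      then show "(G, k) \<in> P" using eq by blast
    qed
  qed
  then show "P \<in> LOCAL_FPT c" unfolding LOCAL_FPT_def using pp cf by blast
qed

end
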